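(* In the setting below, the subgroup $H_M$ contains the commutator subgroup $[G_M,G_M]$, and the quotient $H_M/[G_M,G_M]$ is finite.
   Context: Let $n\ge 1$ and let $M=(m_{ij})\in SL(2n+1,\mathbb Z)$. Assume that $M$ has exactly one real eigenvalue $\alpha$, that $\alpha>0$, $\alpha\neq 1$, that $\alpha$ is a simple eigenvalue, and that the remaining eigenvalues are $\beta_1,\dots,\beta_k,\bar\beta_1,\dots,\bar\beta_k$ with $\mathrm{Im}\,\beta_j>0$. Let $W\subset\mathbb C^{2n+1}$ be the direct sum of the generalized eigenspaces of $M$ for $\beta_1,\dots,\beta_k$ (so $\dim_{\mathbb C}W=n$). Fix a real eigenvector $a=(a^{(1)},\dots,a^{(2n+1)})^\top\in\mathbb R^{2n+1}$ of $M$ for $\alpha$ and a basis $b_1,\dots,b_n$ of $W$, $b_j=(b_j^{(1)},\dots,b_j^{(2n+1)})^\top$, and let $R=(r_{\ell j})\in M_n(\mathbb C)$ be given by $Mb_j=\sum_{\ell=1}^n r_{\ell j}b_\ell$. For $i=1,\dots,2n+1$ put $u_i=(a^{(i)},b_1^{(i)},\dots,b_n^{(i)})^\top\in\mathbb R\times\mathbb C^n$. Let $\mathbb H=\{w\in\mathbb C:\mathrm{Im}\,w>0\}$, and define holomorphic automorphisms of $\mathbb H\times\mathbb C^n$ by $g_0(w,z)=(\alpha w,R^\top z)$ and $g_i(w,z)=(w,z)+u_i$ for $1\le i\le 2n+1$. Let $G_M$ be the group generated by $g_0,\dots,g_{2n+1}$ and $H_M$ the subgroup generated by $g_1,\dots,g_{2n+1}$.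 *)

theory Defs
  imports "Jordan_Normal_Form.Char_Poly" "HOL-Algebra.Generated_Groups" "HOL-Algebra.Bij"
    "HOL-Algebra.Coset"
begin

definition gen_eigenspace :: "complex mat \<Rightarrow> complex \<Rightarrow> complex vec set" where
  "gen_eigenspace A l = {v \<in> carrier_vec (dim_row A).
      \<exists>k::nat. ((A - l \<cdot>\<^sub>m 1\<^sub>m (dim_row A)) ^\<^sub>m k) *\<^sub>v v = 0\<^sub>v (dim_row A)}"

text \<open>Direct sum of the generalized eigenspaces of A for all eigenvalues with positive
  imaginary part: the set of all finite sums of generalized eigenvectors for such eigenvalues.\<close>
definition upper_gen_space :: "complex mat \<Rightarrow> complex vec set" where
  "upper_gen_space A = {finsum_vec TYPE(complex) (dim_row A) f S | S f.
      finite S \<and> S \<subseteq> {b. Im b > 0} \<and> (\<forall>b\<in>S. f b \<in> gen_eigenspace A b)}"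

definition upper_dom :: "nat \<Rightarrow> (complex \<times> complex vec) set" where
  "upper_dom n = {(w, z). Im w > 0 \<and> z \<in> carrier_vec n}"

definition g_zero :: "nat \<Rightarrow> real \<Rightarrow> complex mat \<Rightarrow> (complex \<times> complex vec) \<Rightarrow> (complex \<times> complex vec)" where
  "g_zero n \<alpha> R = restrict (\<lambda>(w, z). (complex_of_real \<alpha> * w, transpose_mat R *\<^sub>v z)) (upper_dom n)"

definition g_trans :: "nat \<Rightarrow> complex \<times> complex vec \<Rightarrow> (complex \<times> complex vec) \<Rightarrow> (complex \<times> complex vec)" where
  "g_trans n u = restrict (\<lambda>(w, z). (w + fst u, z + snd u)) (upper_dom n)"

end

theory Submission imports Defs begin

lemma trans_Bij:
  assumes "Im c = 0" "d \<in> carrier_vec n"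
  shows "g_trans n (c, d) \<in> Bij (upper_dom n)"
proof -
  have "bij_betw (g_trans n (c, d)) (upper_dom n) (upper_dom n)"
  proof (rule bij_betw_byWitness[where f'="\<lambda>(w,z). (w - c, z - d)"])
    show "\<forall>x\<in>upper_dom n. (\<lambda>(w, z). (w - c, z - d)) (g_trans n (c, d) x) = x"
      using assms by (auto simp: g_trans_def upper_dom_def)
    show "\<forall>x\<in>upper_dom n. g_trans n (c, d) ((\<lambda>(w, z). (w - c, z - d)) x) = x"
      using assms by (auto simp: g_trans_def upper_dom_def)
    show "g_trans n (c, d) ` upper_dom n \<subseteq> upper_dom n"
      using assms by (auto simp: g_trans_def upper_dom_def)
    show "(\<lambda>(w, z). (w - c, z - d)) ` upper_dom n \<subseteq> upper_dom n"
      using assms by (auto simp: g_trans_def upper_dom_def)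
  qed
  thus ?thesis by (simp add: Bij_def g_trans_def)
qed

lemma trans_mult:
  assumes "d \<in> carrier_vec n" "d' \<in> carrier_vec n" "Im c = 0" "Im c' = 0"
  shows "g_trans n (c, d) \<otimes>\<^bsub>BijGroup (upper_dom n)\<^esub> g_trans n (c', d') = g_trans n (c + c', d + d')"
  using assms trans_Bij[OF assms(3,1)] trans_Bij[OF assms(4,2)]
  apply (simp add: BijGroup_def compose_def)
  apply (rule ext)
  apply (auto simp: g_trans_def upper_dom_def)
  done

lemma trans_one: "g_trans n (0, 0\<^sub>v n) = \<one>\<^bsub>BijGroup (upper_dom n)\<^esub>"
  by (rule ext) (auto simp: g_trans_def upper_dom_def BijGroup_def)

lemma g0_Bij:
  assumes "\<alpha> > 0" "R \<in> carrier_mat n n" "Ri \<in> carrier_mat n n"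
    "Ri * transpose_mat R = 1\<^sub>m n" "transpose_mat R * Ri = 1\<^sub>m n"
  shows "g_zero n \<alpha> R \<in> Bij (upper_dom n)"
proof -
  have "bij_betw (g_zero n \<alpha> R) (upper_dom n) (upper_dom n)"
  proof (rule bij_betw_byWitness[where f'="\<lambda>(w,z). (w / complex_of_real \<alpha>, Ri *\<^sub>v z)"])
    show "\<forall>x\<in>upper_dom n. (\<lambda>(w,z). (w / complex_of_real \<alpha>, Ri *\<^sub>v z)) (g_zero n \<alpha> R x) = x"
    proof
      fix x assume "x \<in> upper_dom n"
      then obtain w z where x: "x = (w, z)" "z \<in> carrier_vec n" by (auto simp: upper_dom_def)
      have "Ri *\<^sub>v (transpose_mat R *\<^sub>v z) = (Ri * transpose_mat R) *\<^sub>v z"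
        using assms x by (metis assoc_mult_mat_vec carrier_matD(1) carrier_matD(2) transpose_carrier_mat carrier_vecD)
      then show "(\<lambda>(w,z). (w / complex_of_real \<alpha>, Ri *\<^sub>v z)) (g_zero n \<alpha> R x) = x"
        using assms x \<open>x \<in> upper_dom n\<close> by (auto simp: g_zero_def)
    qed
    show "\<forall>x\<in>upper_dom n. g_zero n \<alpha> R ((\<lambda>(w,z). (w / complex_of_real \<alpha>, Ri *\<^sub>v z)) x) = x"
    proof
      fix x assume xd: "x \<in> upper_dom n"
      then obtain w z where x: "x = (w, z)" "z \<in> carrier_vec n" "Im w > 0" by (auto simp: upper_dom_def)
      have "transpose_mat R *\<^sub>v (Ri *\<^sub>v z) = (transpose_mat R * Ri) *\<^sub>v z"
        using assms x by (metis assoc_mult_mat_vec carrier_matD(1) carrier_matD(2) transpose_carrier_mat carrier_vecD)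
      moreover have "(w / complex_of_real \<alpha>, Ri *\<^sub>v z) \<in> upper_dom n"
        using assms x by (auto simp: upper_dom_def)
      ultimately show "g_zero n \<alpha> R ((\<lambda>(w,z). (w / complex_of_real \<alpha>, Ri *\<^sub>v z)) x) = x"
        using assms x by (auto simp: g_zero_def)
    qed
    show "g_zero n \<alpha> R ` upper_dom n \<subseteq> upper_dom n"
      using assms by (auto simp: g_zero_def upper_dom_def)
    show "(\<lambda>(w,z). (w / complex_of_real \<alpha>, Ri *\<^sub>v z)) ` upper_dom n \<subseteq> upper_dom n"
      using assms by (auto simp: upper_dom_def)
  qed
  thus ?thesis by (simp add: Bij_def g_zero_def)
qed

lemma g0_trans_comm:
  assumes "g_zero n \<alpha> R \<in> Bij (upper_dom n)" "R \<in> carrier_mat n n"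
    "d \<in> carrier_vec n" "Im c = 0" "\<alpha> > 0"
  shows "g_zero n \<alpha> R \<otimes>\<^bsub>BijGroup (upper_dom n)\<^esub> g_trans n (c, d) =
         g_trans n (complex_of_real \<alpha> * c, transpose_mat R *\<^sub>v d) \<otimes>\<^bsub>BijGroup (upper_dom n)\<^esub> g_zero n \<alpha> R"
proof -
  have t1: "g_trans n (c, d) \<in> Bij (upper_dom n)" using trans_Bij assms by auto
  have t2: "g_trans n (complex_of_real \<alpha> * c, transpose_mat R *\<^sub>v d) \<in> Bij (upper_dom n)"
    using assms by (intro trans_Bij) auto
  have "compose (upper_dom n) (g_zero n \<alpha> R) (g_trans n (c, d)) =
        compose (upper_dom n) (g_trans n (complex_of_real \<alpha> * c, transpose_mat R *\<^sub>v d)) (g_zero n \<alpha> R)"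
  proof (rule ext)
    fix x
    show "compose (upper_dom n) (g_zero n \<alpha> R) (g_trans n (c, d)) x =
        compose (upper_dom n) (g_trans n (complex_of_real \<alpha> * c, transpose_mat R *\<^sub>v d)) (g_zero n \<alpha> R) x"
    proof (cases "x \<in> upper_dom n")
      case False then show ?thesis by (simp add: compose_def)
    next
      case True
      then obtain w z where x: "x = (w, z)" "Im w > 0" "z \<in> carrier_vec n" by (auto simp: upper_dom_def)
      have in1: "(w + c, z + d) \<in> upper_dom n" using x assms by (auto simp: upper_dom_def)
      have in2: "(complex_of_real \<alpha> * w, transpose_mat R *\<^sub>v z) \<in> upper_dom n"
        using x assms by (auto simp: upper_dom_def)
      have e1: "transpose_mat R *\<^sub>v (z + d) = transpose_mat R *\<^sub>v z + transpose_mat R *\<^sub>v d"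
        using x assms by (intro mult_add_distrib_mat_vec[of _ n n]) auto
      have e2: "complex_of_real \<alpha> * (w + c) = complex_of_real \<alpha> * w + complex_of_real \<alpha> * c"
        by (simp add: distrib_left)
      show ?thesis using True in1 in2 x(1) e1 e2 by (simp add: compose_def g_trans_def g_zero_def)
    qed
  qed
  then show ?thesis using t1 t2 assms(1) by (simp add: BijGroup_def)
qed

lemma (in group) conj_swap:
  assumes "x \<in> carrier G" "y \<in> carrier G" "z \<in> carrier G" "x \<otimes> y = z \<otimes> x"
  shows "inv x \<otimes> z = y \<otimes> inv x"
proof -
  have "inv x \<otimes> z \<otimes> x = inv x \<otimes> (x \<otimes> y)"
    using assms by (simp add: m_assoc)
  also have "\<dots> = y" using assms(1-3) by (simp add: m_assoc[symmetric])
  finally have 1: "inv x \<otimes> z \<otimes> x = y" .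
  have "inv x \<otimes> z = inv x \<otimes> z \<otimes> x \<otimes> inv x"
    using assms by (simp add: m_assoc)
  then show ?thesis unfolding 1 .
qed

lemma (in group) exch_pow:
  assumes x: "x \<in> carrier G" and p: "\<And>e. e \<in> C \<Longrightarrow> p e \<in> carrier G"
    and ex: "\<And>e. e \<in> C \<Longrightarrow> \<exists>f\<in>C. x \<otimes> p e = p f \<otimes> x"
  shows "e \<in> C \<Longrightarrow> \<exists>f\<in>C. x [^] (m::nat) \<otimes> p e = p f \<otimes> x [^] m"
proof (induction m arbitrary: e)
  case 0
  then show ?case using p by auto
next
  case (Suc m)
  obtain f where f: "f \<in> C" "x \<otimes> p e = p f \<otimes> x" using ex Suc.prems by blast
  obtain g where g: "g \<in> C" "x [^] m \<otimes> p f = p g \<otimes> x [^] m" using Suc.IH f(1) by blast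
  have "x [^] Suc m \<otimes> p e = x [^] m \<otimes> (x \<otimes> p e)"
    using x p Suc.prems by (simp add: m_assoc)
  also have "\<dots> = (x [^] m \<otimes> p f) \<otimes> x" using f x p by (simp add: m_assoc)
  also have "\<dots> = p g \<otimes> x [^] Suc m" using g x p by (simp add: m_assoc)
  finally show ?case using g(1) by blast
qed

locale cor_setup =
  fixes n N :: nat and M :: "int mat" and \<alpha> :: real and a :: "real vec"
    and B R Ri :: "complex mat"
  assumes M_carrier: "M \<in> carrier_mat N N" and M_det: "det M = 1"
    and detM1: "det (M - 1\<^sub>m N) \<noteq> 0"
    and \<alpha>_pos: "\<alpha> > 0"
    and a_carrier: "a \<in> carrier_vec N"
    and a_eig: "map_mat real_of_int M *\<^sub>v a = \<alpha> \<cdot>\<^sub>v a"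
    and B_carrier: "B \<in> carrier_mat N n"
    and R_carrier: "R \<in> carrier_mat n n"
    and R_def: "map_mat complex_of_int M * B = B * R"
    and Ri_carrier: "Ri \<in> carrier_mat n n"
    and Ri_l: "Ri * transpose_mat R = 1\<^sub>m n" and Ri_r: "transpose_mat R * Ri = 1\<^sub>m n"
begin

abbreviation BG where "BG \<equiv> BijGroup (upper_dom n)"

definition Lin :: "int vec \<Rightarrow> complex \<times> complex vec" where
  "Lin e = (complex_of_real (a \<bullet> map_vec real_of_int e), transpose_mat B *\<^sub>v map_vec complex_of_int e)"

definition psi where "psi e = g_trans n (Lin e)"

abbreviation g0 where "g0 \<equiv> g_zero n \<alpha> R"

interpretation grp: group BG by (rule group_BijGroup)

lemma carrier_BG: "carrier BG = Bij (upper_dom n)"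
  by (simp add: BijGroup_def)

lemma Lin_props: "Im (fst (Lin e)) = 0" "snd (Lin e) \<in> carrier_vec n"
proof -
  show "Im (fst (Lin e)) = 0" unfolding Lin_def fst_conv by (rule Im_complex_of_real)
  have "dim_vec (snd (Lin e)) = n"
    unfolding Lin_def snd_conv dim_mult_mat_vec index_transpose_mat(2) using B_carrier by (rule carrier_matD(2))
  then show "snd (Lin e) \<in> carrier_vec n" by (simp only: carrier_vec_def mem_Collect_eq)
qed

lemma psi_carrier: "psi e \<in> carrier BG"
proof -
  obtain c d where cd: "Lin e = (c, d)" by force
  have "Im c = 0" "d \<in> carrier_vec n" using Lin_props[of e] cd by auto
  then show ?thesis unfolding psi_def cd carrier_BG by (rule trans_Bij)
qed

lemma g0_carrier: "g0 \<in> carrier BG"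
  using g0_Bij[OF \<alpha>_pos R_carrier Ri_carrier Ri_l Ri_r] by (simp add: BijGroup_def)

lemma psi_mult:
  assumes "e \<in> carrier_vec N" "f \<in> carrier_vec N"
  shows "psi e \<otimes>\<^bsub>BG\<^esub> psi f = psi (e + f)"
proof -
  have mr: "map_vec real_of_int (e + f) = map_vec real_of_int e + map_vec real_of_int f"
    using assms by (intro eq_vecI) auto
  have mc: "map_vec complex_of_int (e + f) = map_vec complex_of_int e + map_vec complex_of_int f"
    using assms by (intro eq_vecI) auto
  have "Lin (e + f) = (fst (Lin e) + fst (Lin f), snd (Lin e) + snd (Lin f))"
    unfolding Lin_def mr mc using assms a_carrier B_carrier
    by (auto simp: scalar_prod_add_distrib[of _ N] mult_add_distrib_mat_vec[of _ n N])
  then show ?thesis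
    unfolding psi_def using Lin_props[of e] Lin_props[of f]
    by (cases "Lin e", cases "Lin f") (simp add: trans_mult)
qed

lemma psi_zero: "psi (0\<^sub>v N) = \<one>\<^bsub>BG\<^esub>"
proof -
  have z1: "map_vec real_of_int (0\<^sub>v N) = 0\<^sub>v N" by (intro eq_vecI) auto
  have z2: "map_vec complex_of_int (0\<^sub>v N) = 0\<^sub>v N" by (intro eq_vecI) auto
  have z3: "a \<bullet> 0\<^sub>v N = 0" using a_carrier by (rule scalar_prod_right_zero)
  have z4: "transpose_mat B *\<^sub>v 0\<^sub>v N = 0\<^sub>v n" using B_carrier by (intro eq_vecI) auto
  have "Lin (0\<^sub>v N) = (0, 0\<^sub>v n)"
    unfolding Lin_def z1 z2 z3 z4 by simp
  then show ?thesis by (simp add: psi_def trans_one)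
qed

lemma psi_inv:
  assumes "e \<in> carrier_vec N"
  shows "inv\<^bsub>BG\<^esub> psi e = psi (- e)"
proof -
  have "psi (- e) \<otimes>\<^bsub>BG\<^esub> psi e = \<one>\<^bsub>BG\<^esub>"
    using assms by (simp add: psi_mult psi_zero[symmetric])
  then show ?thesis using psi_carrier grp.inv_equality by blast
qed

lemma Lin_M:
  assumes e: "e \<in> carrier_vec N"
  shows "Lin (transpose_mat M *\<^sub>v e) = (complex_of_real \<alpha> * fst (Lin e), transpose_mat R *\<^sub>v snd (Lin e))"
proof -
  have h1: "map_vec real_of_int (transpose_mat M *\<^sub>v e) = transpose_mat (map_mat real_of_int M) *\<^sub>v map_vec real_of_int e"
    unfolding map_mat_transpose using M_carrier e by (intro of_int_hom.mult_mat_vec_hom[of _ N N]) auto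
  have h2: "map_vec complex_of_int (transpose_mat M *\<^sub>v e) = transpose_mat (map_mat complex_of_int M) *\<^sub>v map_vec complex_of_int e"
    unfolding map_mat_transpose using M_carrier e by (intro of_int_hom.mult_mat_vec_hom[of _ N N]) auto
  have f1: "a \<bullet> (transpose_mat (map_mat real_of_int M) *\<^sub>v map_vec real_of_int e) = \<alpha> * (a \<bullet> map_vec real_of_int e)"
  proof -
    have "a \<bullet> (transpose_mat (map_mat real_of_int M) *\<^sub>v map_vec real_of_int e)
        = (transpose_mat (map_mat real_of_int M) *\<^sub>v map_vec real_of_int e) \<bullet> a"
      using M_carrier e a_carrier by (intro comm_scalar_prod[of _ N]) auto
    also have "\<dots> = map_vec real_of_int e \<bullet> (map_mat real_of_int M *\<^sub>v a)"
      using M_carrier e a_carrier by (intro transpose_vec_mult_scalar[of _ N N]) auto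
    also have "\<dots> = \<alpha> * (map_vec real_of_int e \<bullet> a)"
      unfolding a_eig using e a_carrier by simp
    also have "map_vec real_of_int e \<bullet> a = a \<bullet> map_vec real_of_int e"
      using e a_carrier by (intro comm_scalar_prod[of _ N]) auto
    finally show ?thesis .
  qed
  let ?Mc = "map_mat complex_of_int M"
  let ?x = "map_vec complex_of_int e"
  have f2: "transpose_mat B *\<^sub>v (transpose_mat ?Mc *\<^sub>v ?x) = transpose_mat R *\<^sub>v (transpose_mat B *\<^sub>v ?x)"
  proof -
    have "transpose_mat B *\<^sub>v (transpose_mat ?Mc *\<^sub>v ?x) = (transpose_mat B * transpose_mat ?Mc) *\<^sub>v ?x"
      using M_carrier B_carrier e by (intro assoc_mult_mat_vec[symmetric, of _ n N _ N]) auto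
    also have "transpose_mat B * transpose_mat ?Mc = transpose_mat (?Mc * B)"
      using M_carrier B_carrier by (intro transpose_mult[symmetric, of _ N N]) auto
    also have "\<dots> = transpose_mat (B * R)" unfolding R_def ..
    also have "\<dots> = transpose_mat R * transpose_mat B"
      using R_carrier B_carrier by (intro transpose_mult[of _ N n]) auto
    also have "(transpose_mat R * transpose_mat B) *\<^sub>v ?x = transpose_mat R *\<^sub>v (transpose_mat B *\<^sub>v ?x)"
      using R_carrier B_carrier e by (intro assoc_mult_mat_vec[of _ n n _ N]) auto
    finally show ?thesis .
  qed
  show ?thesis unfolding Lin_def h1 h2 f1 f2 by (simp only: fst_conv snd_conv of_real_mult)
qed

lemma g0_psi:
  assumes e: "e \<in> carrier_vec N"
  shows "g0 \<otimes>\<^bsub>BG\<^esub> psi e = psi (transpose_mat M *\<^sub>v e) \<otimes>\<^bsub>BG\<^esub> g0"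
proof -
  obtain c d where cd: "Lin e = (c, d)" by force
  have gb: "g0 \<in> Bij (upper_dom n)" using g0_carrier by (simp add: BijGroup_def)
  have d: "d \<in> carrier_vec n" and c: "Im c = 0" using Lin_props[of e] cd by auto
  have 1: "psi (transpose_mat M *\<^sub>v e) = g_trans n (complex_of_real \<alpha> * c, transpose_mat R *\<^sub>v d)"
    unfolding psi_def Lin_M[OF e] cd by simp
  have 2: "psi e = g_trans n (c, d)" unfolding psi_def cd ..
  show ?thesis unfolding 1 2 by (rule g0_trans_comm[OF gb R_carrier d c \<alpha>_pos])
qed


definition Mi where "Mi = adj_mat M"

lemma Mi_props: "Mi \<in> carrier_mat N N" "M * Mi = 1\<^sub>m N" "Mi * M = 1\<^sub>m N"
  using adj_mat[OF M_carrier] M_det unfolding Mi_def by auto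

lemma MMi_T: "e \<in> carrier_vec N \<Longrightarrow> transpose_mat M *\<^sub>v (transpose_mat Mi *\<^sub>v e) = e"
proof -
  assume e: "e \<in> carrier_vec N"
  have "transpose_mat M *\<^sub>v (transpose_mat Mi *\<^sub>v e) = (transpose_mat M * transpose_mat Mi) *\<^sub>v e"
    using e M_carrier Mi_props(1) by (intro assoc_mult_mat_vec[symmetric, of _ N N _ N]) auto
  also have "transpose_mat M * transpose_mat Mi = transpose_mat (Mi * M)"
    using M_carrier Mi_props(1) by (intro transpose_mult[symmetric, of _ N N]) auto
  also have "\<dots> = 1\<^sub>m N" unfolding Mi_props(3) by simp
  finally show ?thesis using e by simp
qed

lemma ginv_psi:
  assumes e: "e \<in> carrier_vec N"
  shows "inv\<^bsub>BG\<^esub> g0 \<otimes>\<^bsub>BG\<^esub> psi e = psi (transpose_mat Mi *\<^sub>v e) \<otimes>\<^bsub>BG\<^esub> inv\<^bsub>BG\<^esub> g0"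
proof -
  have f: "transpose_mat Mi *\<^sub>v e \<in> carrier_vec N" using Mi_props(1) e by auto
  have "g0 \<otimes>\<^bsub>BG\<^esub> psi (transpose_mat Mi *\<^sub>v e) = psi e \<otimes>\<^bsub>BG\<^esub> g0"
    using g0_psi[OF f] MMi_T[OF e] by simp
  then show ?thesis using grp.conj_swap[OF g0_carrier psi_carrier psi_carrier] by blast
qed

lemma exch_int:
  assumes e: "e \<in> carrier_vec N"
  shows "\<exists>f\<in>carrier_vec N. g0 [^]\<^bsub>BG\<^esub> (k::int) \<otimes>\<^bsub>BG\<^esub> psi e = psi f \<otimes>\<^bsub>BG\<^esub> g0 [^]\<^bsub>BG\<^esub> k"
proof (cases "k < 0")
  case True
  have ig: "inv\<^bsub>BG\<^esub> g0 \<in> carrier BG" using g0_carrier by (rule grp.inv_closed)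
  have "\<exists>f\<in>carrier_vec N. (inv\<^bsub>BG\<^esub> g0) [^]\<^bsub>BG\<^esub> (nat (-k)) \<otimes>\<^bsub>BG\<^esub> psi e = psi f \<otimes>\<^bsub>BG\<^esub> (inv\<^bsub>BG\<^esub> g0) [^]\<^bsub>BG\<^esub> (nat (-k))"
  proof (rule grp.exch_pow[where p = psi, OF ig psi_carrier _ e])
    fix e' :: "int vec" assume e': "e' \<in> carrier_vec N"
    have c: "transpose_mat Mi *\<^sub>v e' \<in> carrier_vec N"
      using Mi_props(1) e' by (intro mult_mat_vec_carrier[of _ N N]) auto
    show "\<exists>f\<in>carrier_vec N. inv\<^bsub>BG\<^esub> g0 \<otimes>\<^bsub>BG\<^esub> psi e' = psi f \<otimes>\<^bsub>BG\<^esub> inv\<^bsub>BG\<^esub> g0"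
      using ginv_psi[OF e'] c by blast
  qed
  moreover have "g0 [^]\<^bsub>BG\<^esub> k = inv\<^bsub>BG\<^esub> (g0 [^]\<^bsub>BG\<^esub> (nat (-k)))"
    using True by (simp only: int_pow_def2 if_True)
  moreover have "inv\<^bsub>BG\<^esub> (g0 [^]\<^bsub>BG\<^esub> (nat (-k))) = (inv\<^bsub>BG\<^esub> g0) [^]\<^bsub>BG\<^esub> (nat (-k))"
    by (rule grp.nat_pow_inv[OF g0_carrier, symmetric])
  ultimately show ?thesis by (simp only:)
next
  case False
  have "\<exists>f\<in>carrier_vec N. g0 [^]\<^bsub>BG\<^esub> (nat k) \<otimes>\<^bsub>BG\<^esub> psi e = psi f \<otimes>\<^bsub>BG\<^esub> g0 [^]\<^bsub>BG\<^esub> (nat k)"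
  proof (rule grp.exch_pow[where p = psi, OF g0_carrier psi_carrier _ e])
    fix e' :: "int vec" assume e': "e' \<in> carrier_vec N"
    have c: "transpose_mat M *\<^sub>v e' \<in> carrier_vec N"
      using M_carrier e' by (intro mult_mat_vec_carrier[of _ N N]) auto
    show "\<exists>f\<in>carrier_vec N. g0 \<otimes>\<^bsub>BG\<^esub> psi e' = psi f \<otimes>\<^bsub>BG\<^esub> g0"
      using g0_psi[OF e'] c by blast
  qed
  moreover have "g0 [^]\<^bsub>BG\<^esub> k = g0 [^]\<^bsub>BG\<^esub> (nat k)"
    using False by (simp only: int_pow_def2 if_False)
  ultimately show ?thesis by (simp only:)
qed

definition SS :: "int \<Rightarrow> ((complex \<times> complex vec) \<Rightarrow> (complex \<times> complex vec)) set" where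
  "SS k = {psi e \<otimes>\<^bsub>BG\<^esub> g0 [^]\<^bsub>BG\<^esub> k | e. e \<in> carrier_vec N}"

lemma SS_carrier: "x \<in> SS k \<Longrightarrow> x \<in> carrier BG"
  unfolding SS_def using psi_carrier g0_carrier by auto

lemma SS_mult:
  assumes x: "x \<in> SS k" and y: "y \<in> SS l"
  shows "x \<otimes>\<^bsub>BG\<^esub> y \<in> SS (k + l)"
proof -
  obtain e where e: "e \<in> carrier_vec N" "x = psi e \<otimes>\<^bsub>BG\<^esub> g0 [^]\<^bsub>BG\<^esub> k" using x unfolding SS_def by auto
  obtain f where f: "f \<in> carrier_vec N" "y = psi f \<otimes>\<^bsub>BG\<^esub> g0 [^]\<^bsub>BG\<^esub> l" using y unfolding SS_def by auto
  obtain f' where f': "f' \<in> carrier_vec N" "g0 [^]\<^bsub>BG\<^esub> k \<otimes>\<^bsub>BG\<^esub> psi f = psi f' \<otimes>\<^bsub>BG\<^esub> g0 [^]\<^bsub>BG\<^esub> k"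
    using exch_int[OF f(1)] by blast
  have gk: "g0 [^]\<^bsub>BG\<^esub> k \<in> carrier BG" "g0 [^]\<^bsub>BG\<^esub> l \<in> carrier BG" using g0_carrier by auto
  have "x \<otimes>\<^bsub>BG\<^esub> y = psi e \<otimes>\<^bsub>BG\<^esub> (g0 [^]\<^bsub>BG\<^esub> k \<otimes>\<^bsub>BG\<^esub> psi f) \<otimes>\<^bsub>BG\<^esub> g0 [^]\<^bsub>BG\<^esub> l"
    unfolding e f using gk psi_carrier by (simp add: grp.m_assoc)
  also have "\<dots> = (psi e \<otimes>\<^bsub>BG\<^esub> psi f') \<otimes>\<^bsub>BG\<^esub> (g0 [^]\<^bsub>BG\<^esub> k \<otimes>\<^bsub>BG\<^esub> g0 [^]\<^bsub>BG\<^esub> l)"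
    unfolding f'(2) using gk psi_carrier by (simp add: grp.m_assoc)
  also have "\<dots> = psi (e + f') \<otimes>\<^bsub>BG\<^esub> g0 [^]\<^bsub>BG\<^esub> (k + l)"
    using psi_mult[OF e(1) f'(1)] grp.int_pow_mult[OF g0_carrier] by simp
  finally show ?thesis unfolding SS_def using e(1) f'(1) by auto
qed

lemma SS_inv:
  assumes x: "x \<in> SS k"
  shows "inv\<^bsub>BG\<^esub> x \<in> SS (- k)"
proof -
  obtain e where e: "e \<in> carrier_vec N" "x = psi e \<otimes>\<^bsub>BG\<^esub> g0 [^]\<^bsub>BG\<^esub> k" using x unfolding SS_def by auto
  have me: "- e \<in> carrier_vec N" using e by simp
  obtain f where f: "f \<in> carrier_vec N" "g0 [^]\<^bsub>BG\<^esub> (-k) \<otimes>\<^bsub>BG\<^esub> psi (- e) = psi f \<otimes>\<^bsub>BG\<^esub> g0 [^]\<^bsub>BG\<^esub> (-k)"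
    using exch_int[OF me] by blast
  have "inv\<^bsub>BG\<^esub> x = inv\<^bsub>BG\<^esub> (g0 [^]\<^bsub>BG\<^esub> k) \<otimes>\<^bsub>BG\<^esub> inv\<^bsub>BG\<^esub> (psi e)"
    unfolding e using g0_carrier psi_carrier by (simp add: grp.inv_mult_group)
  also have "\<dots> = g0 [^]\<^bsub>BG\<^esub> (-k) \<otimes>\<^bsub>BG\<^esub> psi (- e)"
    using psi_inv[OF e(1)] grp.int_pow_neg[OF g0_carrier] by simp
  finally show ?thesis unfolding SS_def using f by auto
qed

lemma SS0: "x \<in> SS 0 \<Longrightarrow> x \<in> psi ` carrier_vec N"
  unfolding SS_def using psi_carrier by auto

lemma psi_SS0: "e \<in> carrier_vec N \<Longrightarrow> psi e \<in> SS 0"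
  unfolding SS_def using psi_carrier by force

lemma g0_SS1: "g0 \<in> SS 1"
proof -
  have "psi (0\<^sub>v N) \<otimes>\<^bsub>BG\<^esub> g0 [^]\<^bsub>BG\<^esub> (1::int) = g0"
    unfolding psi_zero grp.int_pow_1[OF g0_carrier] by (rule grp.l_one[OF g0_carrier])
  moreover have "(0\<^sub>v N :: int vec) \<in> carrier_vec N" by (rule zero_carrier_vec)
  ultimately have "\<exists>e. g0 = psi e \<otimes>\<^bsub>BG\<^esub> g0 [^]\<^bsub>BG\<^esub> (1::int) \<and> e \<in> carrier_vec N"
    by (intro exI[of _ "0\<^sub>v N"]) simp
  then show ?thesis unfolding SS_def by (simp only: mem_Collect_eq)
qed

lemma gen_SS:
  assumes C: "C \<subseteq> carrier_vec N"
  shows "x \<in> generate BG (insert g0 (psi ` C)) \<Longrightarrow> \<exists>k. x \<in> SS k"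
proof (induction x rule: generate.induct)
  case one
  have "psi (0\<^sub>v N) \<in> SS 0" by (rule psi_SS0) (rule zero_carrier_vec)
  then show ?case unfolding psi_zero by (rule exI)
next
  case (incl h)
  show ?case
  proof (cases "h = g0")
    case True
    then show ?thesis using g0_SS1 by (intro exI[of _ 1]) simp
  next
    case False
    then obtain e where "e \<in> C" "h = psi e" using incl by auto
    then have "h \<in> SS 0" using C psi_SS0 by auto
    then show ?thesis by (rule exI)
  qed
next
  case (inv h)
  show ?case
  proof (cases "h = g0")
    case True
    then show ?thesis using SS_inv[OF g0_SS1] by (intro exI[of _ "-1"]) simp
  next
    case False
    then obtain e where "e \<in> C" "h = psi e" using inv by auto
    then have "h \<in> SS 0" using C psi_SS0 by auto
    then have "inv\<^bsub>BG\<^esub> h \<in> SS (- 0)" by (rule SS_inv)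
    then show ?thesis by (rule exI)
  qed
next
  case (eng h1 h2)
  then obtain k l where "h1 \<in> SS k" "h2 \<in> SS l" by blast
  then have "h1 \<otimes>\<^bsub>BG\<^esub> h2 \<in> SS (k + l)" by (rule SS_mult)
  then show ?case by (rule exI)
qed

lemma comm_psi:
  assumes "x \<in> SS k" "y \<in> SS l"
  shows "x \<otimes>\<^bsub>BG\<^esub> y \<otimes>\<^bsub>BG\<^esub> inv\<^bsub>BG\<^esub> x \<otimes>\<^bsub>BG\<^esub> inv\<^bsub>BG\<^esub> y \<in> psi ` carrier_vec N"
proof -
  have "x \<otimes>\<^bsub>BG\<^esub> y \<otimes>\<^bsub>BG\<^esub> inv\<^bsub>BG\<^esub> x \<otimes>\<^bsub>BG\<^esub> inv\<^bsub>BG\<^esub> y \<in> SS (k + l + - k + - l)"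
    using assms by (intro SS_mult SS_inv)
  then show ?thesis using SS0 by simp
qed


definition U :: "int vec set" where "U = (\<lambda>i. unit_vec N i) ` {..<N}"

lemma U_carrier: "U \<subseteq> carrier_vec N"
  unfolding U_def by auto

definition Hs where "Hs = generate BG (psi ` U)"

lemma psiU_carrier: "psi ` U \<subseteq> carrier BG"
  using psi_carrier by auto

lemma Hs_subgroup: "subgroup Hs BG"
  unfolding Hs_def by (rule grp.generate_is_subgroup[OF psiU_carrier])

lemma Hs_sub: "Hs \<subseteq> psi ` carrier_vec N"
proof
  fix x assume "x \<in> Hs"
  then show "x \<in> psi ` carrier_vec N" unfolding Hs_def
  proof (induction x rule: generate.induct)
    case one
    have "psi (0\<^sub>v N) \<in> psi ` carrier_vec N" by (rule imageI) (rule zero_carrier_vec)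
    then show ?case unfolding psi_zero .
  next
    case (incl h)
    then show ?case using U_carrier by auto
  next
    case (inv h)
    then obtain e where e: "e \<in> U" "h = psi e" by auto
    then have ec: "e \<in> carrier_vec N" using U_carrier by auto
    then have "inv\<^bsub>BG\<^esub> h = psi (- e)" unfolding e(2) by (rule psi_inv)
    moreover have "- e \<in> carrier_vec N" using ec by simp
    ultimately show ?case by blast
  next
    case (eng h1 h2)
    then obtain e f where "e \<in> carrier_vec N" "f \<in> carrier_vec N" "h1 = psi e" "h2 = psi f" by blast
    then have "h1 \<otimes>\<^bsub>BG\<^esub> h2 = psi (e + f)" "e + f \<in> carrier_vec N" using psi_mult by auto
    then show ?case by blast
  qed
qed

lemma smult_unit_in:
  assumes i: "i < N"
  shows "psi (k \<cdot>\<^sub>v unit_vec N i) \<in> Hs"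
proof (induction k rule: int_induct[where k = 0])
  case base
  have "(0::int) \<cdot>\<^sub>v unit_vec N i = 0\<^sub>v N" by (intro eq_vecI) auto
  then show ?case using subgroup.one_closed[OF Hs_subgroup] psi_zero by simp
next
  case (step1 j)
  have eq: "(j + 1) \<cdot>\<^sub>v unit_vec N i = j \<cdot>\<^sub>v unit_vec N i + unit_vec N i"
    by (intro eq_vecI) (auto simp: algebra_simps)
  have u: "psi (unit_vec N i) \<in> Hs" unfolding Hs_def U_def using i by (intro generate.incl) auto
  have "psi (j \<cdot>\<^sub>v unit_vec N i + unit_vec N i) = psi (j \<cdot>\<^sub>v unit_vec N i) \<otimes>\<^bsub>BG\<^esub> psi (unit_vec N i)"
    by (rule psi_mult[symmetric]) auto
  then show ?case unfolding eq using subgroup.m_closed[OF Hs_subgroup step1(2) u] by simp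
next
  case (step2 j)
  have eq: "(j - 1) \<cdot>\<^sub>v unit_vec N i = j \<cdot>\<^sub>v unit_vec N i + - unit_vec N i"
    by (intro eq_vecI) (auto simp: algebra_simps)
  have u: "psi (unit_vec N i) \<in> Hs" unfolding Hs_def U_def using i by (intro generate.incl) auto
  have u': "psi (- unit_vec N i) \<in> Hs"
    using subgroup.m_inv_closed[OF Hs_subgroup u] psi_inv[of "unit_vec N i"] by simp
  have "psi (j \<cdot>\<^sub>v unit_vec N i + - unit_vec N i) = psi (j \<cdot>\<^sub>v unit_vec N i) \<otimes>\<^bsub>BG\<^esub> psi (- unit_vec N i)"
    by (rule psi_mult[symmetric]) auto
  then show ?case unfolding eq using subgroup.m_closed[OF Hs_subgroup step2(2) u'] by simp
qed

lemma psi_in_Hs: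
  assumes e: "e \<in> carrier_vec N"
  shows "psi e \<in> Hs"
proof -
  define tr where "tr m = vec N (\<lambda>i. if i < m then e $ i else 0)" for m
  have "m \<le> N \<Longrightarrow> psi (tr m) \<in> Hs" for m
  proof (induction m)
    case 0
    have "tr 0 = 0\<^sub>v N" unfolding tr_def by (intro eq_vecI) auto
    then show ?case using subgroup.one_closed[OF Hs_subgroup] psi_zero by simp
  next
    case (Suc m)
    then have m: "m < N" by simp
    have eq: "tr (Suc m) = tr m + (e $ m) \<cdot>\<^sub>v unit_vec N m"
      unfolding tr_def using m by (intro eq_vecI) (auto simp: less_Suc_eq)
    have "psi (tr m + (e $ m) \<cdot>\<^sub>v unit_vec N m) = psi (tr m) \<otimes>\<^bsub>BG\<^esub> psi ((e $ m) \<cdot>\<^sub>v unit_vec N m)"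
      unfolding tr_def by (rule psi_mult[symmetric]) auto
    then show ?case unfolding eq
      using subgroup.m_closed[OF Hs_subgroup Suc.IH smult_unit_in[OF m]] Suc.prems by simp
  qed
  moreover have "tr N = e" unfolding tr_def using e by (intro eq_vecI) auto
  ultimately show ?thesis by force
qed

lemma Hs_eq: "Hs = psi ` carrier_vec N"
  using Hs_sub psi_in_Hs by blast

definition Gs where "Gs = generate BG (insert g0 (psi ` U))"

lemma Gs_carrier: "Gs \<subseteq> carrier BG"
proof
  fix x assume "x \<in> Gs"
  moreover have "insert g0 (psi ` U) \<subseteq> carrier BG" using g0_carrier psiU_carrier by auto
  ultimately show "x \<in> carrier BG" unfolding Gs_def using grp.generate_in_carrier by blast
qed

lemma Hs_Gs: "Hs \<subseteq> Gs"
  unfolding Hs_def Gs_def by (rule grp.mono_generate) auto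

lemma derived_Hs: "derived BG Gs \<subseteq> Hs"
proof -
  have "derived_set BG Gs \<subseteq> Hs"
  proof
    fix x assume "x \<in> derived_set BG Gs"
    then obtain h1 h2 where h: "h1 \<in> Gs" "h2 \<in> Gs"
      "x = h1 \<otimes>\<^bsub>BG\<^esub> h2 \<otimes>\<^bsub>BG\<^esub> inv\<^bsub>BG\<^esub> h1 \<otimes>\<^bsub>BG\<^esub> inv\<^bsub>BG\<^esub> h2" by blast
    obtain k where k: "h1 \<in> SS k" using gen_SS[OF U_carrier] h(1) unfolding Gs_def by blast
    obtain l where l: "h2 \<in> SS l" using gen_SS[OF U_carrier] h(2) unfolding Gs_def by blast
    show "x \<in> Hs" unfolding h(3) Hs_eq by (rule comm_psi[OF k l])
  qed
  then show ?thesis unfolding derived_def by (rule grp.generate_subgroup_incl[OF _ Hs_subgroup])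
qed

definition D where "D = transpose_mat M - 1\<^sub>m N"

lemma D_carrier: "D \<in> carrier_mat N N" unfolding D_def using M_carrier by auto

lemma D_in_derived:
  assumes e: "e \<in> carrier_vec N"
  shows "psi (D *\<^sub>v e) \<in> derived BG Gs"
proof -
  have g0G: "g0 \<in> Gs" unfolding Gs_def by (intro generate.incl) auto
  have pG: "psi e \<in> Gs" using psi_in_Hs[OF e] Hs_Gs by auto
  have me: "- e \<in> carrier_vec N" using e by simp
  have Me: "transpose_mat M *\<^sub>v e \<in> carrier_vec N" using M_carrier e by (intro mult_mat_vec_carrier[of _ N N]) auto
  have "g0 \<otimes>\<^bsub>BG\<^esub> psi e \<otimes>\<^bsub>BG\<^esub> inv\<^bsub>BG\<^esub> g0 \<otimes>\<^bsub>BG\<^esub> inv\<^bsub>BG\<^esub> (psi e)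
      = psi (transpose_mat M *\<^sub>v e) \<otimes>\<^bsub>BG\<^esub> g0 \<otimes>\<^bsub>BG\<^esub> inv\<^bsub>BG\<^esub> g0 \<otimes>\<^bsub>BG\<^esub> psi (- e)"
    unfolding g0_psi[OF e] psi_inv[OF e] ..
  also have "\<dots> = psi (transpose_mat M *\<^sub>v e) \<otimes>\<^bsub>BG\<^esub> psi (- e)"
    using g0_carrier psi_carrier by (simp add: grp.m_assoc)
  also have "\<dots> = psi (transpose_mat M *\<^sub>v e + - e)" by (rule psi_mult[OF Me me])
  also have "transpose_mat M *\<^sub>v e + - e = D *\<^sub>v e"
  proof -
    have "D *\<^sub>v e = transpose_mat M *\<^sub>v e - 1\<^sub>m N *\<^sub>v e"
      unfolding D_def using M_carrier e by (intro minus_mult_distrib_mat_vec[of _ N N]) auto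
    then show ?thesis using e Me by auto
  qed
  finally have "psi (D *\<^sub>v e) = g0 \<otimes>\<^bsub>BG\<^esub> psi e \<otimes>\<^bsub>BG\<^esub> inv\<^bsub>BG\<^esub> g0 \<otimes>\<^bsub>BG\<^esub> inv\<^bsub>BG\<^esub> (psi e)" ..
  then have "psi (D *\<^sub>v e) \<in> derived_set BG Gs" using g0G pG by blast
  then show ?thesis unfolding derived_def by (rule generate.incl)
qed

lemma detD: "det D \<noteq> 0"
proof -
  have "D = transpose_mat (M - 1\<^sub>m N)"
    unfolding D_def using M_carrier by (simp add: transpose_minus[of _ N N])
  moreover have "M - 1\<^sub>m N \<in> carrier_mat N N" by (rule minus_carrier_mat) simp
  ultimately have "det D = det (M - 1\<^sub>m N)" using det_transpose by metis
  then show ?thesis using detM1 by simp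
qed

definition Rset where "Rset = {r \<in> carrier_vec N. \<forall>i<N. r $ i \<in> {- \<bar>det D\<bar>..\<bar>det D\<bar>}}"

lemma Rset_finite: "finite Rset"
proof -
  let ?d = "\<bar>det D\<bar>"
  have "Rset \<subseteq> (\<lambda>f. vec N f) ` (PiE {..<N} (\<lambda>_. {- ?d..?d}))"
  proof
    fix r assume r: "r \<in> Rset"
    have "r = vec N (restrict (\<lambda>i. r $ i) {..<N})"
      using r unfolding Rset_def by (intro eq_vecI) auto
    moreover have "restrict (\<lambda>i. r $ i) {..<N} \<in> PiE {..<N} (\<lambda>_. {- ?d..?d})"
      using r unfolding Rset_def by auto
    ultimately show "r \<in> (\<lambda>f. vec N f) ` (PiE {..<N} (\<lambda>_. {- ?d..?d}))" by blast
  qed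
  moreover have "finite ((\<lambda>f. vec N f) ` (PiE {..<N} (\<lambda>_. {- ?d..?d})))"
    by (intro finite_imageI finite_PiE) auto
  ultimately show ?thesis by (rule finite_subset)
qed

lemma decomp:
  assumes e: "e \<in> carrier_vec N"
  shows "\<exists>r\<in>Rset. \<exists>k\<in>derived BG Gs. psi e = k \<otimes>\<^bsub>BG\<^esub> psi r"
proof -
  let ?d = "det D"
  define q where "q = vec N (\<lambda>i. e $ i div ?d)"
  define r where "r = vec N (\<lambda>i. e $ i mod ?d)"
  have q: "q \<in> carrier_vec N" unfolding q_def by simp
  have rc: "r \<in> carrier_vec N" unfolding r_def by simp
  have eq: "e = ?d \<cdot>\<^sub>v q + r" unfolding q_def r_def using e
    by (intro eq_vecI) (auto simp: mult.commute)
  have adj: "D * adj_mat D = ?d \<cdot>\<^sub>m 1\<^sub>m N" using adj_mat[OF D_carrier] by simp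
  have adjc: "adj_mat D \<in> carrier_mat N N" using adj_mat[OF D_carrier] by simp
  have "D *\<^sub>v (adj_mat D *\<^sub>v q) = (D * adj_mat D) *\<^sub>v q"
    using D_carrier adjc q by (intro assoc_mult_mat_vec[symmetric, of _ N N _ N]) auto
  also have "\<dots> = ?d \<cdot>\<^sub>v q" unfolding adj using q by (intro eq_vecI) auto
  finally have dq: "D *\<^sub>v (adj_mat D *\<^sub>v q) = ?d \<cdot>\<^sub>v q" .
  have aq: "adj_mat D *\<^sub>v q \<in> carrier_vec N" using adjc q by (intro mult_mat_vec_carrier[of _ N N]) auto
  have kin: "psi (?d \<cdot>\<^sub>v q) \<in> derived BG Gs" using D_in_derived[OF aq] unfolding dq .
  have "psi e = psi (?d \<cdot>\<^sub>v q) \<otimes>\<^bsub>BG\<^esub> psi r"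
    unfolding eq by (rule psi_mult[symmetric]) (use q rc in auto)
  moreover have "r \<in> Rset"
  proof -
    have "\<forall>i<N. r $ i \<in> {- \<bar>?d\<bar>..\<bar>?d\<bar>}"
    proof (intro allI impI)
      fix i assume i: "i < N"
      have "r $ i = e $ i mod ?d" unfolding r_def using i by simp
      moreover have "\<bar>e $ i mod ?d\<bar> \<le> \<bar>?d\<bar>"
      proof (cases "?d > 0")
        case True
        then show ?thesis using pos_mod_sign[OF True, of "e $ i"] pos_mod_bound[OF True, of "e $ i"] by simp
      next
        case False
        then have neg: "?d < 0" using detD by simp
        then show ?thesis using neg_mod_sign[OF neg, of "e $ i"] neg_mod_bound[OF neg, of "e $ i"] by simp
      qed
      ultimately show "r $ i \<in> {- \<bar>?d\<bar>..\<bar>?d\<bar>}" by auto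
    qed
    then show ?thesis unfolding Rset_def using rc by simp
  qed
  ultimately show ?thesis using kin by blast
qed

lemma finite_cosets:
  "finite (rcosets\<^bsub>BG\<lparr>carrier := Hs\<rparr>\<^esub> (derived BG Gs))"
proof -
  let ?K = "derived BG Gs"
  have Ksub: "subgroup ?K BG" by (rule grp.derived_is_subgroup[OF Gs_carrier])
  have rc: "?K #>\<^bsub>BG\<lparr>carrier := Hs\<rparr>\<^esub> x = ?K #>\<^bsub>BG\<^esub> x" for x
    unfolding r_coset_def by simp
  have "rcosets\<^bsub>BG\<lparr>carrier := Hs\<rparr>\<^esub> ?K \<subseteq> (\<lambda>r. ?K #>\<^bsub>BG\<^esub> psi r) ` Rset"
  proof
    fix C assume "C \<in> rcosets\<^bsub>BG\<lparr>carrier := Hs\<rparr>\<^esub> ?K"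
    then obtain x where x: "x \<in> Hs" "C = ?K #>\<^bsub>BG\<^esub> x" unfolding RCOSETS_def rc by auto
    then obtain e where e: "e \<in> carrier_vec N" "x = psi e" unfolding Hs_eq by auto
    obtain r k where r: "r \<in> Rset" "k \<in> ?K" "psi e = k \<otimes>\<^bsub>BG\<^esub> psi r" using decomp[OF e(1)] by blast
    have kc: "k \<in> carrier BG" using r(2) subgroup.mem_carrier[OF Ksub] by blast
    have "?K #>\<^bsub>BG\<^esub> (k \<otimes>\<^bsub>BG\<^esub> psi r) = (?K #>\<^bsub>BG\<^esub> k) #>\<^bsub>BG\<^esub> psi r"
      using grp.coset_mult_assoc[OF subgroup.subset[OF Ksub] kc psi_carrier] by simp
    also have "?K #>\<^bsub>BG\<^esub> k = ?K" by (rule grp.coset_join2[OF kc Ksub r(2)])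
    finally have "C = ?K #>\<^bsub>BG\<^esub> psi r" using x e r by simp
    then show "C \<in> (\<lambda>r. ?K #>\<^bsub>BG\<^esub> psi r) ` Rset" using r(1) by blast
  qed
  moreover have "finite ((\<lambda>r. ?K #>\<^bsub>BG\<^esub> psi r) ` Rset)" using Rset_finite by simp
  ultimately show ?thesis by (rule finite_subset)
qed

end

theorem corollary2p6:
  fixes n :: nat and M :: "int mat" and \<alpha> :: real and a :: "real vec"
    and B :: "complex mat" and R :: "complex mat"
  defines "N \<equiv> 2 * n + 1"
  defines "Mc \<equiv> map_mat complex_of_int M"
  defines "W \<equiv> upper_gen_space Mc"
  defines "u \<equiv> (\<lambda>i. (complex_of_real (a $ i), vec n (\<lambda>j. B $$ (i, j))))"
  defines "G \<equiv> generate (BijGroup (upper_dom n))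
                 (insert (g_zero n \<alpha> R) ((\<lambda>i. g_trans n (u i)) ` {..<N}))"
  defines "H \<equiv> generate (BijGroup (upper_dom n)) ((\<lambda>i. g_trans n (u i)) ` {..<N})"
  assumes n_pos: "n \<ge> 1"
    and M_carrier: "M \<in> carrier_mat N N" and M_det: "det M = 1"
    and one_real_eig: "\<And>l. (eigenvalue Mc l \<and> Im l = 0) \<longleftrightarrow> l = complex_of_real \<alpha>"
    and \<alpha>_pos: "\<alpha> > 0" and \<alpha>_ne1: "\<alpha> \<noteq> 1"
    and \<alpha>_simple: "Polynomial.order (complex_of_real \<alpha>) (char_poly Mc) = 1"
    and a_carrier: "a \<in> carrier_vec N" and a_nz: "a \<noteq> 0\<^sub>v N"
    and a_eig: "map_mat real_of_int M *\<^sub>v a = \<alpha> \<cdot>\<^sub>v a"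
    and B_carrier: "B \<in> carrier_mat N n"
    and B_in_W: "\<And>j. j < n \<Longrightarrow> col B j \<in> W"
    and B_indep: "\<And>c. c \<in> carrier_vec n \<Longrightarrow> B *\<^sub>v c = 0\<^sub>v N \<Longrightarrow> c = 0\<^sub>v n"
    and B_span: "W \<subseteq> {B *\<^sub>v c | c. c \<in> carrier_vec n}"
    and R_carrier: "R \<in> carrier_mat n n"
    and R_def: "Mc * B = B * R"
  shows "derived (BijGroup (upper_dom n)) G \<subseteq> H \<and>
         finite (rcosets\<^bsub>(BijGroup (upper_dom n))\<lparr>carrier := H\<rparr>\<^esub> (derived (BijGroup (upper_dom n)) G))"
proof -
  have Mc_carrier: "Mc \<in> carrier_mat N N" unfolding Mc_def using M_carrier by simp
  have detM1: "det (M - 1\<^sub>m N) \<noteq> 0"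
  proof
    assume det0: "det (M - 1\<^sub>m N) = 0"
    have c: "M - 1\<^sub>m N \<in> carrier_mat N N" by (rule minus_carrier_mat) simp
    obtain v where v: "v \<in> carrier_vec N" "v \<noteq> 0\<^sub>v N" "(M - 1\<^sub>m N) *\<^sub>v v = 0\<^sub>v N"
      using det_0_iff_vec_prod_zero[OF c] det0 by blast
    have "(M - 1\<^sub>m N) *\<^sub>v v = M *\<^sub>v v - 1\<^sub>m N *\<^sub>v v"
      using M_carrier v(1) by (intro minus_mult_distrib_mat_vec[of _ N N]) auto
    then have z: "M *\<^sub>v v - v = 0\<^sub>v N" using v by simp
    have Mv: "M *\<^sub>v v = v"
    proof (rule eq_vecI)
      fix i assume i: "i < dim_vec v"
      have "(M *\<^sub>v v - v) $ i = 0" using z i v by simp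
      then show "(M *\<^sub>v v) $ i = v $ i" using i v M_carrier by simp
    next
      show "dim_vec (M *\<^sub>v v) = dim_vec v" using M_carrier v by simp
    qed
    let ?vc = "map_vec complex_of_int v"
    have "Mc *\<^sub>v ?vc = map_vec complex_of_int (M *\<^sub>v v)"
      unfolding Mc_def by (rule of_int_hom.mult_mat_vec_hom[OF M_carrier v(1), symmetric])
    then have Mvc: "Mc *\<^sub>v ?vc = 1 \<cdot>\<^sub>v ?vc" unfolding Mv by simp
    have vcnz: "?vc \<noteq> 0\<^sub>v N"
    proof
      assume "?vc = 0\<^sub>v N"
      then have "v = 0\<^sub>v N" using v(1) by (intro eq_vecI) (auto simp: vec_eq_iff)
      then show False using v(2) by simp
    qed
    have "eigenvector Mc ?vc 1"
      unfolding eigenvector_def using Mc_carrier v(1) vcnz Mvc by auto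
    then have "eigenvalue Mc 1" unfolding eigenvalue_def by blast
    then have "(1::complex) = complex_of_real \<alpha>" using one_real_eig[of 1] by simp
    then have "\<alpha> = 1" by (metis of_real_eq_1_iff)
    then show False using \<alpha>_ne1 by simp
  qed
  have detR: "det R \<noteq> 0"
  proof
    assume "det R = 0"
    then obtain v where v: "v \<in> carrier_vec n" "v \<noteq> 0\<^sub>v n" "R *\<^sub>v v = 0\<^sub>v n"
      using det_0_iff_vec_prod_zero[OF R_carrier] by blast
    have Bv: "B *\<^sub>v v \<in> carrier_vec N" using B_carrier v(1) by (intro mult_mat_vec_carrier[of _ N n]) auto
    have "Mc *\<^sub>v (B *\<^sub>v v) = (Mc * B) *\<^sub>v v"
      using Mc_carrier B_carrier v(1) by (intro assoc_mult_mat_vec[symmetric, of _ N N _ n]) auto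
    also have "\<dots> = (B * R) *\<^sub>v v" unfolding R_def ..
    also have "\<dots> = B *\<^sub>v (R *\<^sub>v v)"
      using R_carrier B_carrier v(1) by (intro assoc_mult_mat_vec[of _ N n _ n]) auto
    also have "\<dots> = 0\<^sub>v N" unfolding v(3) using B_carrier by (intro eq_vecI) auto
    finally have z: "Mc *\<^sub>v (B *\<^sub>v v) = 0\<^sub>v N" .
    have dMc: "det Mc = 1" unfolding Mc_def of_int_hom.hom_det M_det by simp
    have adjc: "adj_mat Mc \<in> carrier_mat N N" using adj_mat[OF Mc_carrier] by simp
    have one: "(1::complex) \<cdot>\<^sub>m 1\<^sub>m N = 1\<^sub>m N" by (intro eq_matI) auto
    have adj: "adj_mat Mc * Mc = 1\<^sub>m N" using adj_mat(3)[OF Mc_carrier] unfolding dMc one .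
    have "B *\<^sub>v v = (adj_mat Mc * Mc) *\<^sub>v (B *\<^sub>v v)" unfolding adj using Bv by simp
    also have "\<dots> = adj_mat Mc *\<^sub>v (Mc *\<^sub>v (B *\<^sub>v v))"
      using adjc Mc_carrier Bv by (intro assoc_mult_mat_vec[of _ N N _ N]) auto
    also have "\<dots> = 0\<^sub>v N" unfolding z using adjc by (intro eq_vecI) auto
    finally have "B *\<^sub>v v = 0\<^sub>v N" .
    then have "v = 0\<^sub>v n" using B_indep v(1) by blast
    then show False using v(2) by simp
  qed
  define RT where "RT = transpose_mat R"
  have RTc: "RT \<in> carrier_mat n n" unfolding RT_def using R_carrier by simp
  define d where "d = det RT"
  have dnz: "d \<noteq> 0" unfolding d_def RT_def using detR det_transpose[OF R_carrier] by simp
  define Ri where "Ri = (1 / d) \<cdot>\<^sub>m adj_mat RT"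
  have adjRT: "adj_mat RT \<in> carrier_mat n n" "RT * adj_mat RT = d \<cdot>\<^sub>m 1\<^sub>m n" "adj_mat RT * RT = d \<cdot>\<^sub>m 1\<^sub>m n"
    using adj_mat[OF RTc] unfolding d_def by auto
  have Ric: "Ri \<in> carrier_mat n n" unfolding Ri_def using adjRT(1) by simp
  have Ril: "Ri * RT = 1\<^sub>m n"
  proof -
    have "Ri * RT = (1 / d) \<cdot>\<^sub>m (adj_mat RT * RT)"
      unfolding Ri_def by (rule mult_smult_assoc_mat[OF adjRT(1) RTc])
    also have "\<dots> = 1\<^sub>m n" unfolding adjRT(3) using dnz by (intro eq_matI) auto
    finally show ?thesis .
  qed
  have Rir: "RT * Ri = 1\<^sub>m n"
  proof -
    have "RT * Ri = (1 / d) \<cdot>\<^sub>m (RT * adj_mat RT)"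
      unfolding Ri_def by (rule mult_smult_distrib[OF RTc adjRT(1)])
    also have "\<dots> = 1\<^sub>m n" unfolding adjRT(2) using dnz by (intro eq_matI) auto
    finally show ?thesis .
  qed
  interpret cs: cor_setup n N M \<alpha> a B R Ri
  proof
    show "M \<in> carrier_mat N N" by (rule M_carrier)
    show "det M = 1" by (rule M_det)
    show "det (M - 1\<^sub>m N) \<noteq> 0" by (rule detM1)
    show "\<alpha> > 0" by (rule \<alpha>_pos)
    show "a \<in> carrier_vec N" by (rule a_carrier)
    show "map_mat real_of_int M *\<^sub>v a = \<alpha> \<cdot>\<^sub>v a" by (rule a_eig)
    show "B \<in> carrier_mat N n" by (rule B_carrier)
    show "R \<in> carrier_mat n n" by (rule R_carrier)
    show "map_mat complex_of_int M * B = B * R" using R_def unfolding Mc_def .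
    show "Ri \<in> carrier_mat n n" by (rule Ric)
    show "Ri * transpose_mat R = 1\<^sub>m n" using Ril unfolding RT_def .
    show "transpose_mat R * Ri = 1\<^sub>m n" using Rir unfolding RT_def .
  qed
  have ui: "g_trans n (u i) = cs.psi (unit_vec N i)" if i: "i < N" for i
  proof -
    have m1: "map_vec real_of_int (unit_vec N i) = unit_vec N i" using i by (intro eq_vecI) auto
    have m2: "map_vec complex_of_int (unit_vec N i) = unit_vec N i" using i by (intro eq_vecI) auto
    have s1: "a \<bullet> unit_vec N i = a $ i" using i by (rule scalar_prod_right_unit)
    have s2: "transpose_mat B *\<^sub>v unit_vec N i = vec n (\<lambda>j. B $$ (i, j))"
      using B_carrier i by (intro eq_vecI) auto
    show ?thesis unfolding cs.psi_def cs.Lin_def m1 m2 s1 s2 u_def ..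
  qed
  have gen_eq: "(\<lambda>i. g_trans n (u i)) ` {..<N} = cs.psi ` cs.U"
    unfolding cs.U_def using ui by (auto simp: image_image)
  have GG: "G = cs.Gs" unfolding G_def cs.Gs_def gen_eq ..
  have HH: "H = cs.Hs" unfolding H_def cs.Hs_def gen_eq ..
  show ?thesis unfolding GG HH using cs.derived_Hs cs.finite_cosets by blast
qed

end
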